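(* Let $\tau$ be a self-similar tile set. Then every $\tau$-tiling of the plane is aperiodic, i.e., no $\tau$-tiling $U$ admits a nonzero vector $T\in\mathbb{Z}^2$ with $U(x+T)=U(x)$ for all $x\in\mathbb{Z}^2$.
   Context: Fix a finite set $C$ of colors. A tile is an element of $C^4$ (its left, right, top and bottom colors); a tile set is a finite subset $\tau\subset C^4$. A $\tau$-tiling (of the plane) is a map $U\colon\mathbb{Z}^2\to\tau$ such that for every $(x,y)$ the right color of $U(x,y)$ equals the left color of $U(x+1,y)$ and the top color of $U(x,y)$ equals the bottom color of $U(x,y+1)$; a tiling of a finite region is defined the same way, requiring matching only for adjacent cells inside the region. For a tile set $\tau$ and an integer $N>1$, an $N\times N$ macro-tile is a $\tau$-tiling of an $N\times N$ square; its right (left, top, bottom) macro-color is the sequence of the $N$ right (left, top, bottom) colors of the tiles along its right (left, top, bottom) side. A simulation of a tile set $\rho$ by a tile set $\tau$ with zoom factor $N>1$ is a map $S$ from $\rho$ to $N\times N$ $\tau$-macro-tiles such that: (i) $S$ is injective; (ii) for all $r_1,r_2\in\rho$, the right color of $r_1$ equals the left color of $r_2$ iff the right macro-color of $S(r_1)$ equals the left macro-color of $S(r_2)$, and similarly for top/bottom; (iii) every $\tau$-tiling of the plane can be split by horizontal and vertical lines into $N\times N$ macro-tiles all belonging to the range of $S$, and this splitting is unique. A tile set is self-similar if it simulates itself (with some zoom factor $N>1$). *)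

theory Defs
  imports Main
begin

type_synonym 'c tile = "'c \<times> 'c \<times> 'c \<times> 'c"

definition lft :: "'c tile \<Rightarrow> 'c" where "lft t = fst t"
definition rgt :: "'c tile \<Rightarrow> 'c" where "rgt t = fst (snd t)"
definition topc :: "'c tile \<Rightarrow> 'c" where "topc t = fst (snd (snd t))"
definition botc :: "'c tile \<Rightarrow> 'c" where "botc t = snd (snd (snd t))"

definition tile_set :: "'c tile set \<Rightarrow> bool" where
  "tile_set \<tau> \<longleftrightarrow> finite \<tau>"

definition tiling :: "'c tile set \<Rightarrow> (int \<times> int \<Rightarrow> 'c tile) \<Rightarrow> bool" where
  "tiling \<tau> U \<longleftrightarrow> (\<forall>x y. U (x, y) \<in> \<tau>
      \<and> rgt (U (x, y)) = lft (U (x + 1, y))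
      \<and> topc (U (x, y)) = botc (U (x, y + 1)))"

text \<open>An N x N macro-tile: a tiling of the square {0..<N} x {0..<N}; only the values
  on the square matter (values outside are ignored, see macro_eq).\<close>
definition macro_tile :: "'c tile set \<Rightarrow> nat \<Rightarrow> (nat \<times> nat \<Rightarrow> 'c tile) \<Rightarrow> bool" where
  "macro_tile \<tau> N M \<longleftrightarrow> (\<forall>i<N. \<forall>j<N. M (i, j) \<in> \<tau>
      \<and> (i + 1 < N \<longrightarrow> rgt (M (i, j)) = lft (M (i + 1, j)))
      \<and> (j + 1 < N \<longrightarrow> topc (M (i, j)) = botc (M (i, j + 1))))"

definition macro_eq :: "nat \<Rightarrow> (nat \<times> nat \<Rightarrow> 'c tile) \<Rightarrow> (nat \<times> nat \<Rightarrow> 'c tile) \<Rightarrow> bool" where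
  "macro_eq N M M' \<longleftrightarrow> (\<forall>i<N. \<forall>j<N. M (i, j) = M' (i, j))"

definition right_mc :: "nat \<Rightarrow> (nat \<times> nat \<Rightarrow> 'c tile) \<Rightarrow> 'c list" where
  "right_mc N M = map (\<lambda>j. rgt (M (N - 1, j))) [0..<N]"
definition left_mc :: "nat \<Rightarrow> (nat \<times> nat \<Rightarrow> 'c tile) \<Rightarrow> 'c list" where
  "left_mc N M = map (\<lambda>j. lft (M (0, j))) [0..<N]"
definition top_mc :: "nat \<Rightarrow> (nat \<times> nat \<Rightarrow> 'c tile) \<Rightarrow> 'c list" where
  "top_mc N M = map (\<lambda>i. topc (M (i, N - 1))) [0..<N]"
definition bot_mc :: "nat \<Rightarrow> (nat \<times> nat \<Rightarrow> 'c tile) \<Rightarrow> 'c list" where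
  "bot_mc N M = map (\<lambda>i. botc (M (i, 0))) [0..<N]"

definition block :: "(int \<times> int \<Rightarrow> 'c tile) \<Rightarrow> nat \<Rightarrow> int \<Rightarrow> int \<Rightarrow> nat \<times> nat \<Rightarrow> 'c tile" where
  "block U N x0 y0 = (\<lambda>(i, j). U (x0 + int i, y0 + int j))"

definition good_split ::
  "'c tile set \<Rightarrow> ('c tile \<Rightarrow> nat \<times> nat \<Rightarrow> 'c tile) \<Rightarrow> nat \<Rightarrow> (int \<times> int \<Rightarrow> 'c tile) \<Rightarrow> nat \<Rightarrow> nat \<Rightarrow> bool" where
  "good_split \<rho> S N U a b \<longleftrightarrow> (\<forall>k l :: int. \<exists>r\<in>\<rho>.
      macro_eq N (block U N (int a + k * int N) (int b + l * int N)) (S r))"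

text \<open>Simulation of rho by tau with zoom factor N. A splitting by horizontal and vertical
  lines into N x N squares is determined by the offset (a, b) modulo N.\<close>
definition simulates ::
  "'c tile set \<Rightarrow> 'c tile set \<Rightarrow> nat \<Rightarrow> ('c tile \<Rightarrow> nat \<times> nat \<Rightarrow> 'c tile) \<Rightarrow> bool" where
  "simulates \<tau> \<rho> N S \<longleftrightarrow> N > 1
     \<and> (\<forall>r\<in>\<rho>. macro_tile \<tau> N (S r))
     \<and> (\<forall>r1\<in>\<rho>. \<forall>r2\<in>\<rho>. macro_eq N (S r1) (S r2) \<longrightarrow> r1 = r2)
     \<and> (\<forall>r1\<in>\<rho>. \<forall>r2\<in>\<rho>. (rgt r1 = lft r2 \<longleftrightarrow> right_mc N (S r1) = left_mc N (S r2)))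
     \<and> (\<forall>r1\<in>\<rho>. \<forall>r2\<in>\<rho>. (topc r1 = botc r2 \<longleftrightarrow> top_mc N (S r1) = bot_mc N (S r2)))
     \<and> (\<forall>U. tiling \<tau> U \<longrightarrow> (\<exists>!(a, b). a < N \<and> b < N \<and> good_split \<rho> S N U a b))"

definition self_similar :: "'c tile set \<Rightarrow> bool" where
  "self_similar \<tau> \<longleftrightarrow> tile_set \<tau> \<and> (\<exists>N S. simulates \<tau> \<tau> N S)"

end

theory Submission
  imports Defs
begin

lemma blk_shift:
  assumes P: "\<forall>x y. U (x + t1, y + t2) = U (x, y)"
  shows "block U N (x0 + t1) (y0 + t2) = block U N x0 y0"
proof
  fix p :: "nat \<times> nat"
  obtain i j where p: "p = (i, j)" by (cases p)
  have "U (x0 + t1 + int i, y0 + t2 + int j) = U ((x0 + int i) + t1, (y0 + int j) + t2)"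
    by (simp add: algebra_simps)
  also have "\<dots> = U (x0 + int i, y0 + int j)" using P by blast
  finally show "block U N (x0 + t1) (y0 + t2) p = block U N x0 y0 p"
    by (simp add: block_def p)
qed

lemma key:
  assumes sim: "simulates \<tau> \<tau> N S" and til: "tiling \<tau> U"
    and P: "\<forall>x y. U (x + t1, y + t2) = U (x, y)" and nz: "(t1, t2) \<noteq> (0, 0)"
  shows "\<exists>V q1 q2. tiling \<tau> V \<and> (\<forall>x y. V (x + q1, y + q2) = V (x, y)) \<and> (q1, q2) \<noteq> (0, 0)
      \<and> \<bar>q1\<bar> + \<bar>q2\<bar> < \<bar>t1\<bar> + \<bar>t2\<bar>"
proof -
  have N1: "N > 1" using sim by (simp add: simulates_def)
  hence Npos: "int N > 0" by simp
  have ex1: "\<exists>!(a, b). a < N \<and> b < N \<and> good_split \<tau> S N U a b"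
    using sim til by (simp add: simulates_def)
  then obtain p where p1: "case p of (a, b) \<Rightarrow> a < N \<and> b < N \<and> good_split \<tau> S N U a b"
    and p2: "\<And>q. (case q of (a, b) \<Rightarrow> a < N \<and> b < N \<and> good_split \<tau> S N U a b) \<Longrightarrow> q = p"
    by (metis (no_types, lifting))
  obtain a b where ab: "p = (a, b)" by (cases p)
  have aN: "a < N" and bN: "b < N" and gs: "good_split \<tau> S N U a b" using p1 ab by auto
  define q1 where "q1 = (int a + t1) div int N"
  define q2 where "q2 = (int b + t2) div int N"
  define a' where "a' = nat ((int a + t1) mod int N)"
  define b' where "b' = nat ((int b + t2) mod int N)"
  have ea: "int a + t1 = q1 * int N + int a'"
    using Npos unfolding q1_def a'_def by (simp add: mult.commute)
  have eb: "int b + t2 = q2 * int N + int b'"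
    using Npos unfolding q2_def b'_def by (simp add: mult.commute)
  have a'N: "a' < N" unfolding a'_def using Npos
    by (metis nat_less_iff pos_mod_bound pos_mod_sign)
  have b'N: "b' < N" unfolding b'_def using Npos
    by (metis nat_less_iff pos_mod_bound pos_mod_sign)
  have gs': "good_split \<tau> S N U a' b'"
    unfolding good_split_def
  proof (intro allI)
    fix k l :: int
    obtain r where r: "r \<in> \<tau>"
      "macro_eq N (block U N (int a + (k - q1) * int N) (int b + (l - q2) * int N)) (S r)"
      using gs unfolding good_split_def by blast
    have "block U N (int a' + k * int N) (int b' + l * int N)
        = block U N ((int a + (k - q1) * int N) + t1) ((int b + (l - q2) * int N) + t2)"
    proof -
      have "int a' + k * int N = (int a + (k - q1) * int N) + t1" using ea by (simp add: algebra_simps)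
      moreover have "int b' + l * int N = (int b + (l - q2) * int N) + t2" using eb by (simp add: algebra_simps)
      ultimately show ?thesis by simp
    qed
    also have "\<dots> = block U N (int a + (k - q1) * int N) (int b + (l - q2) * int N)"
      using blk_shift[OF P] by blast
    finally show "\<exists>r\<in>\<tau>. macro_eq N (block U N (int a' + k * int N) (int b' + l * int N)) (S r)"
      using r by auto
  qed
  have "(a', b') = p" using p2[of "(a', b')"] a'N b'N gs' by auto
  hence "a' = a" "b' = b" using ab by auto
  hence t1: "t1 = q1 * int N" and t2: "t2 = q2 * int N" using ea eb by auto
  define Q where "Q = (\<lambda>k l r. r \<in> \<tau> \<and> macro_eq N (block U N (int a + k * int N) (int b + l * int N)) (S r))"
  define V where "V = (\<lambda>(k, l). SOME r. Q k l r)"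
  have VQ: "Q k l (V (k, l))" for k l
  proof -
    have "\<exists>r. Q k l r" using gs unfolding good_split_def Q_def by blast
    thus ?thesis unfolding V_def by (simp add: someI_ex)
  qed
  have Vin: "V (k, l) \<in> \<tau>" for k l using VQ[of k l] by (simp add: Q_def)
  have Veq: "S (V (k, l)) (i, j) = U (int a + k * int N + int i, int b + l * int N + int j)"
    if "i < N" "j < N" for k l i j
    using VQ[of k l] that by (simp add: Q_def macro_eq_def block_def)
  have sr: "\<forall>r1\<in>\<tau>. \<forall>r2\<in>\<tau>. (rgt r1 = lft r2 \<longleftrightarrow> right_mc N (S r1) = left_mc N (S r2))"
    and st: "\<forall>r1\<in>\<tau>. \<forall>r2\<in>\<tau>. (topc r1 = botc r2 \<longleftrightarrow> top_mc N (S r1) = bot_mc N (S r2))"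
    using sim by (simp_all add: simulates_def)
  have tU: "rgt (U (x, y)) = lft (U (x + 1, y))" "topc (U (x, y)) = botc (U (x, y + 1))" for x y
    using til by (simp_all add: tiling_def)
  have N1eq: "int (N - 1) = int N - 1" using N1 by simp
  have tilV: "tiling \<tau> V"
    unfolding tiling_def
  proof (intro allI conjI)
    fix k l
    show "V (k, l) \<in> \<tau>" by (rule Vin)
    have "right_mc N (S (V (k, l))) = left_mc N (S (V (k + 1, l)))"
      unfolding right_mc_def left_mc_def
    proof (rule map_cong[OF refl])
      fix j assume "j \<in> set [0..<N]"
      hence j: "j < N" by simp
      have "rgt (S (V (k, l)) (N - 1, j)) = rgt (U (int a + k * int N + int (N - 1), int b + l * int N + int j))"
        using Veq[of "N - 1" j k l] j N1 by simp
      also have "\<dots> = lft (U (int a + k * int N + int (N - 1) + 1, int b + l * int N + int j))"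
        by (rule tU)
      also have "int a + k * int N + int (N - 1) + 1 = int a + (k + 1) * int N + int 0"
        using N1eq by (simp add: algebra_simps)
      also have "lft (U (\<dots>, int b + l * int N + int j)) = lft (S (V (k + 1, l)) (0, j))"
        using Veq[of 0 j "k + 1" l] j N1 by simp
      finally show "rgt (S (V (k, l)) (N - 1, j)) = lft (S (V (k + 1, l)) (0, j))" .
    qed
    thus "rgt (V (k, l)) = lft (V (k + 1, l))" using sr Vin by blast
    have "top_mc N (S (V (k, l))) = bot_mc N (S (V (k, l + 1)))"
      unfolding top_mc_def bot_mc_def
    proof (rule map_cong[OF refl])
      fix i assume "i \<in> set [0..<N]"
      hence i: "i < N" by simp
      have "topc (S (V (k, l)) (i, N - 1)) = topc (U (int a + k * int N + int i, int b + l * int N + int (N - 1)))"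
        using Veq[of i "N - 1" k l] i N1 by simp
      also have "\<dots> = botc (U (int a + k * int N + int i, int b + l * int N + int (N - 1) + 1))"
        by (rule tU)
      also have "int b + l * int N + int (N - 1) + 1 = int b + (l + 1) * int N + int 0"
        using N1eq by (simp add: algebra_simps)
      also have "botc (U (int a + k * int N + int i, \<dots>)) = botc (S (V (k, l + 1)) (i, 0))"
        using Veq[of i 0 k "l + 1"] i N1 by simp
      finally show "topc (S (V (k, l)) (i, N - 1)) = botc (S (V (k, l + 1)) (i, 0))" .
    qed
    thus "topc (V (k, l)) = botc (V (k, l + 1))" using st Vin by blast
  qed
  have perV: "\<forall>x y. V (x + q1, y + q2) = V (x, y)"
  proof (intro allI)
    fix x y
    have "block U N (int a + (x + q1) * int N) (int b + (y + q2) * int N)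
        = block U N ((int a + x * int N) + t1) ((int b + y * int N) + t2)"
      using t1 t2 by (simp add: algebra_simps)
    also have "\<dots> = block U N (int a + x * int N) (int b + y * int N)"
      using blk_shift[OF P] by blast
    finally have "Q (x + q1) (y + q2) = Q x y" unfolding Q_def by simp
    thus "V (x + q1, y + q2) = V (x, y)" unfolding V_def by simp
  qed
  have at1: "\<bar>t1\<bar> = \<bar>q1\<bar> * int N" using t1 Npos by (simp add: abs_mult)
  have at2: "\<bar>t2\<bar> = \<bar>q2\<bar> * int N" using t2 Npos by (simp add: abs_mult)
  have nzq: "(q1, q2) \<noteq> (0, 0)" using nz t1 t2 by auto
  have le1: "\<bar>q1\<bar> \<le> \<bar>t1\<bar>" and le2: "\<bar>q2\<bar> \<le> \<bar>t2\<bar>"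
    using at1 at2 N1 by (simp_all add: mult_le_cancel_left1) 
  have "q1 \<noteq> 0 \<Longrightarrow> \<bar>q1\<bar> < \<bar>t1\<bar>" using at1 N1 by simp
  moreover have "q2 \<noteq> 0 \<Longrightarrow> \<bar>q2\<bar> < \<bar>t2\<bar>" using at2 N1 by simp
  ultimately have "\<bar>q1\<bar> + \<bar>q2\<bar> < \<bar>t1\<bar> + \<bar>t2\<bar>" using le1 le2 nzq by fastforce
  thus ?thesis using tilV perV nzq by blast
qed

theorem mainTheorem1:
  fixes \<tau> :: "'c tile set"
  assumes "self_similar \<tau>"
  shows "\<forall>U. tiling \<tau> U \<longrightarrow>
           \<not> (\<exists>T :: int \<times> int. T \<noteq> (0, 0) \<and>
                (\<forall>x y. U (x + fst T, y + snd T) = U (x, y)))"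
proof -
  obtain N S where sim: "simulates \<tau> \<tau> N S" using assms by (auto simp: self_similar_def)
  have "\<And>U t1 t2. nat (\<bar>t1\<bar> + \<bar>t2\<bar>) = n \<Longrightarrow> tiling \<tau> U \<Longrightarrow> (t1, t2) \<noteq> (0, 0) \<Longrightarrow>
      (\<forall>x y. U (x + t1, y + t2) = U (x, y)) \<Longrightarrow> False" for n
  proof (induction n rule: less_induct)
    case (less n)
    obtain V q1 q2 where "tiling \<tau> V" "\<forall>x y. V (x + q1, y + q2) = V (x, y)" "(q1, q2) \<noteq> (0, 0)"
      "\<bar>q1\<bar> + \<bar>q2\<bar> < \<bar>t1\<bar> + \<bar>t2\<bar>"
      using key[OF sim less.prems(2) less.prems(4) less.prems(3)] by blast
    moreover have "nat (\<bar>q1\<bar> + \<bar>q2\<bar>) < n" using calculation(4) less.prems(1) by (metis abs_ge_zero add_nonneg_nonneg nat_less_eq_zless)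
    ultimately show False using less.IH[of "nat (\<bar>q1\<bar> + \<bar>q2\<bar>)" q1 q2 V] by blast
  qed
  thus ?thesis by (metis prod.collapse)
qed

end
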